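(* If $s\ge 7$ then $\pi\ge 2(n-q-2m)$.
   Context: $G$ is a set of size $n$ and $G(\circ)$, $G(\ast)$ are distinct groups on $G$ with the same identity element. $\mathrm{diff}(\circ,\ast)=\{(a,b):a\circ b\ne a\ast b\}$, $\mathrm{dist}(\circ,\ast)=|\mathrm{diff}(\circ,\ast)|$, $\mathrm{dist}_a=|\{b:a\circ b\ne a\ast b\}|$; $H=\{a:\mathrm{dist}_a=0\}$, $h=|H|$; $K=\{a:\mathrm{dist}_a<n/3\}$, $k=|K|$; $m=\min\{\mathrm{dist}_a:\mathrm{dist}_a>0\}$. Standing assumption: $m\ge 3$. Let $q=\lceil n/3\rceil$ and the profit $\pi=\mathrm{dist}(\circ,\ast)-((k-h)m+(n-k)q)$. Let $S=\{(a,b)\in\mathrm{diff}(\circ,\ast):a,b\in K,\ a\ne b\}$, $s=|S|$. *)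

theory Defs
  imports Complex_Main "HOL-Algebra.Group"
begin

text \<open>Two groups A (operation \<circ>) and B (operation \<ast>) on the same carrier set G.\<close>

definition diff_set :: "('a,'b) monoid_scheme \<Rightarrow> ('a,'c) monoid_scheme \<Rightarrow> ('a \<times> 'a) set" where
  "diff_set A B = {(a,b). a \<in> carrier A \<and> b \<in> carrier A \<and> a \<otimes>\<^bsub>A\<^esub> b \<noteq> a \<otimes>\<^bsub>B\<^esub> b}"

definition dist_ops :: "('a,'b) monoid_scheme \<Rightarrow> ('a,'c) monoid_scheme \<Rightarrow> nat" where
  "dist_ops A B = card (diff_set A B)"

definition dist_at :: "('a,'b) monoid_scheme \<Rightarrow> ('a,'c) monoid_scheme \<Rightarrow> 'a \<Rightarrow> nat" where
  "dist_at A B a = card {b \<in> carrier A. a \<otimes>\<^bsub>A\<^esub> b \<noteq> a \<otimes>\<^bsub>B\<^esub> b}"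

definition H_set :: "('a,'b) monoid_scheme \<Rightarrow> ('a,'c) monoid_scheme \<Rightarrow> 'a set" where
  "H_set A B = {a \<in> carrier A. dist_at A B a = 0}"

definition K_set :: "('a,'b) monoid_scheme \<Rightarrow> ('a,'c) monoid_scheme \<Rightarrow> 'a set" where
  "K_set A B = {a \<in> carrier A. real (dist_at A B a) < real (card (carrier A)) / 3}"

definition m_val :: "('a,'b) monoid_scheme \<Rightarrow> ('a,'c) monoid_scheme \<Rightarrow> nat" where
  "m_val A B = Min {dist_at A B a | a. a \<in> carrier A \<and> dist_at A B a > 0}"

definition q_val :: "('a,'b) monoid_scheme \<Rightarrow> nat" where
  "q_val A = nat \<lceil>real (card (carrier A)) / 3\<rceil>"

definition profit :: "('a,'b) monoid_scheme \<Rightarrow> ('a,'c) monoid_scheme \<Rightarrow> int" where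
  "profit A B = int (dist_ops A B)
     - ((int (card (K_set A B)) - int (card (H_set A B))) * int (m_val A B)
        + (int (card (carrier A)) - int (card (K_set A B))) * int (q_val A))"

definition S_set :: "('a,'b) monoid_scheme \<Rightarrow> ('a,'c) monoid_scheme \<Rightarrow> ('a \<times> 'a) set" where
  "S_set A B = {(a,b) \<in> diff_set A B. a \<in> K_set A B \<and> b \<in> K_set A B \<and> a \<noteq> b}"

end

theory Submission
  imports Defs
begin

lemma row_bound:
  assumes GA: "group A" and GB: "group B" and CB: "carrier B = carrier A"
    and fin: "finite (carrier A)"
    and a: "a \<in> carrier A" and b: "b \<in> carrier A"
    and ne: "a \<otimes>\<^bsub>A\<^esub> b \<noteq> a \<otimes>\<^bsub>B\<^esub> b"
    and x: "x = a \<otimes>\<^bsub>A\<^esub> b \<or> x = a \<otimes>\<^bsub>B\<^esub> b"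
  shows "card (carrier A) \<le> dist_at A B x + dist_at A B a + dist_at A B b"
proof -
  interpret A: group A by (rule GA)
  interpret B: group B by (rule GB)
  let ?C = "carrier A"
  define Da where "Da = {c \<in> ?C. a \<otimes>\<^bsub>A\<^esub> c \<noteq> a \<otimes>\<^bsub>B\<^esub> c}"
  define Db where "Db = {c \<in> ?C. b \<otimes>\<^bsub>A\<^esub> c \<noteq> b \<otimes>\<^bsub>B\<^esub> c}"
  define Dx where "Dx = {c \<in> ?C. x \<otimes>\<^bsub>A\<^esub> c \<noteq> x \<otimes>\<^bsub>B\<^esub> c}"
  define E where "E = {c \<in> ?C. b \<otimes>\<^bsub>A\<^esub> c \<in> Da}"
  have ca: "card Da = dist_at A B a" unfolding Da_def dist_at_def ..
  have cb: "card Db = dist_at A B b" unfolding Db_def dist_at_def ..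
  have cx: "card Dx = dist_at A B x" unfolding Dx_def dist_at_def ..
  have fDa: "finite Da" "finite Db" "finite Dx" "finite E"
    using fin by (auto simp: Da_def Db_def Dx_def E_def)
  have "card E \<le> card Da"
  proof (rule card_inj_on_le[where f="\<lambda>c. b \<otimes>\<^bsub>A\<^esub> c"])
    show "inj_on (\<lambda>c. b \<otimes>\<^bsub>A\<^esub> c) E"
      using b by (auto simp: inj_on_def E_def)
    show "(\<lambda>c. b \<otimes>\<^bsub>A\<^esub> c) ` E \<subseteq> Da" by (auto simp: E_def)
  qed (use fDa in auto)
  have abA: "a \<otimes>\<^bsub>A\<^esub> b \<in> ?C" using a b by simp
  have abB: "a \<otimes>\<^bsub>B\<^esub> b \<in> ?C" using a b CB B.m_closed by metis
  have sub: "?C - (Db \<union> E) \<subseteq> Dx"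
  proof
    fix c assume c: "c \<in> ?C - (Db \<union> E)"
    then have cC: "c \<in> ?C" and e1: "b \<otimes>\<^bsub>A\<^esub> c = b \<otimes>\<^bsub>B\<^esub> c"
      and e2: "a \<otimes>\<^bsub>A\<^esub> (b \<otimes>\<^bsub>A\<^esub> c) = a \<otimes>\<^bsub>B\<^esub> (b \<otimes>\<^bsub>A\<^esub> c)"
      using a b by (auto simp: Db_def E_def Da_def)
    have key: "(a \<otimes>\<^bsub>A\<^esub> b) \<otimes>\<^bsub>A\<^esub> c = (a \<otimes>\<^bsub>B\<^esub> b) \<otimes>\<^bsub>B\<^esub> c"
    proof -
      have "(a \<otimes>\<^bsub>A\<^esub> b) \<otimes>\<^bsub>A\<^esub> c = a \<otimes>\<^bsub>A\<^esub> (b \<otimes>\<^bsub>A\<^esub> c)"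
        using a b cC by (simp add: A.m_assoc)
      also have "\<dots> = a \<otimes>\<^bsub>B\<^esub> (b \<otimes>\<^bsub>B\<^esub> c)" using e1 e2 by simp
      also have "\<dots> = (a \<otimes>\<^bsub>B\<^esub> b) \<otimes>\<^bsub>B\<^esub> c"
        using a b cC CB by (simp add: B.m_assoc)
      finally show ?thesis .
    qed
    show "c \<in> Dx"
    proof (cases "x = a \<otimes>\<^bsub>A\<^esub> b")
      case True
      have "(a \<otimes>\<^bsub>A\<^esub> b) \<otimes>\<^bsub>B\<^esub> c \<noteq> (a \<otimes>\<^bsub>B\<^esub> b) \<otimes>\<^bsub>B\<^esub> c"
        using B.right_cancel[of c "a \<otimes>\<^bsub>A\<^esub> b" "a \<otimes>\<^bsub>B\<^esub> b"] cC abA abB CB ne by simp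
      then show ?thesis using True key cC by (simp add: Dx_def)
    next
      case False
      then have xe: "x = a \<otimes>\<^bsub>B\<^esub> b" using x by simp
      have "(a \<otimes>\<^bsub>B\<^esub> b) \<otimes>\<^bsub>A\<^esub> c \<noteq> (a \<otimes>\<^bsub>A\<^esub> b) \<otimes>\<^bsub>A\<^esub> c"
        using A.right_cancel[of c "a \<otimes>\<^bsub>B\<^esub> b" "a \<otimes>\<^bsub>A\<^esub> b"] cC abA abB ne by auto
      then show ?thesis using xe key cC by (simp add: Dx_def)
    qed
  qed
  have "card ?C \<le> card ((?C - (Db \<union> E)) \<union> (Db \<union> E))"
    by (rule card_mono) (use fin fDa in auto)
  also have "\<dots> \<le> card (?C - (Db \<union> E)) + card (Db \<union> E)" by (rule card_Un_le)
  also have "\<dots> \<le> card Dx + (card Db + card E)"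
    using card_mono[OF fDa(3) sub] card_Un_le[of Db E] by linarith
  finally show ?thesis using ca cb cx \<open>card E \<le> card Da\<close> by linarith
qed

lemma comb:
  fixes S :: "('a \<times> 'a) set"
  assumes fin: "finite S" and irr: "\<forall>(a,b)\<in>S. a \<noteq> b" and c7: "7 \<le> card S"
  shows "(\<exists>a. 3 \<le> card {b. (a,b)\<in>S}) \<or> (\<exists>b. 3 \<le> card {a. (a,b)\<in>S}) \<or>
         (\<exists>a1 b1 a2 b2. (a1,b1)\<in>S \<and> (a2,b2)\<in>S \<and> a1\<noteq>a2 \<and> a1\<noteq>b2 \<and> b1\<noteq>a2 \<and> b1\<noteq>b2)"
proof (rule ccontr)
  assume H: "\<not> ?thesis"
  have F1: "card {b. (a,b)\<in>S} \<le> 2" for a using H by (metis not_less_eq_eq numeral_3_eq_3 numeral_2_eq_2 )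
  have F2: "card {a. (a,b)\<in>S} \<le> 2" for b using H by (metis not_less_eq_eq numeral_3_eq_3 numeral_2_eq_2 )
  have ND: "a1=a2 \<or> a1=b2 \<or> b1=a2 \<or> b1=b2" if "(a1,b1)\<in>S" "(a2,b2)\<in>S" for a1 b1 a2 b2
    using H that by blast
  have star: "card S \<le> 4" if st: "\<forall>(x,y)\<in>S. x = c \<or> y = c" for c
  proof -
    have fa: "finite {b. (c,b)\<in>S}" by (rule finite_subset[OF _ finite_imageI[OF fin, of snd]]) force
    have fb: "finite {a. (a,c)\<in>S}" by (rule finite_subset[OF _ finite_imageI[OF fin, of fst]]) force
    have "S \<subseteq> Pair c ` {b. (c,b)\<in>S} \<union> (\<lambda>a. (a,c)) ` {a. (a,c)\<in>S}" using st by auto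
    then have "card S \<le> card (Pair c ` {b. (c,b)\<in>S} \<union> (\<lambda>a. (a,c)) ` {a. (a,c)\<in>S})"
      by (rule card_mono[rotated]) (use fa fb in auto)
    also have "\<dots> \<le> card (Pair c ` {b. (c,b)\<in>S}) + card ((\<lambda>a. (a,c)) ` {a. (a,c)\<in>S})"
      by (rule card_Un_le)
    also have "\<dots> \<le> card {b. (c,b)\<in>S} + card {a. (a,c)\<in>S}"
      using card_image_le[OF fa, of "Pair c"] card_image_le[OF fb, of "\<lambda>a. (a,c)"] by linarith
    finally show ?thesis using F1[of c] F2[of c] by linarith
  qed
  have "S \<noteq> {}" using c7 by auto
  then obtain a b where ab: "(a,b)\<in>S" by auto
  show False
  proof (cases "\<forall>(x,y)\<in>S. x = a \<or> y = a")
    case True then show False using star c7 by fastforce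
  next
    case False
    then obtain x1 y1 where p1: "(x1,y1)\<in>S" "x1\<noteq>a" "y1\<noteq>a" by auto
    show False
    proof (cases "\<forall>(x,y)\<in>S. x = b \<or> y = b")
      case True then show False using star c7 by fastforce
    next
      case False
      then obtain x2 y2 where p2: "(x2,y2)\<in>S" "x2\<noteq>b" "y2\<noteq>b" by auto
      define c where "c = (if x1 = b then y1 else x1)"
      define d where "d = (if x2 = a then y2 else x2)"
      have n1: "x1 = b \<or> y1 = b" using ND[OF ab p1(1)] p1 by auto
      have n2: "x2 = a \<or> y2 = a" using ND[OF ab p2(1)] p2 by auto
      have i1: "x1 \<noteq> y1" "x2 \<noteq> y2" using irr p1(1) p2(1) by auto
      have ab': "a \<noteq> b" using irr ab by auto
      have s1: "x1 \<in> {b,c} \<and> y1 \<in> {b,c}" "c \<noteq> a" "c \<noteq> b"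
        using n1 i1 p1 by (auto simp: c_def)
      have s2: "x2 \<in> {a,d} \<and> y2 \<in> {a,d}" "d \<noteq> a" "d \<noteq> b"
        using n2 i1 p2 by (auto simp: d_def)
      have cd: "c = d" using ND[OF p1(1) p2(1)] s1 s2 ab' by auto
      have "S \<subseteq> set [(a,b),(b,a),(a,c),(c,a),(b,c),(c,b)]"
      proof
        fix p assume pS: "p \<in> S"
        obtain x y where p: "p = (x,y)" by fastforce
        have "x \<noteq> y" using irr pS p by auto
        moreover have "x=a \<or> x=b \<or> y=a \<or> y=b" using ND[OF ab, of x y] pS p by auto
        moreover have "x=b \<or> x=c \<or> y=b \<or> y=c" using ND[OF p1(1), of x y] pS p s1 by auto
        moreover have "x=a \<or> x=c \<or> y=a \<or> y=c" using ND[OF p2(1), of x y] pS p s2 cd by auto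
        ultimately show "p \<in> set [(a,b),(b,a),(a,c),(c,a),(b,c),(c,b)]" using p ab' s1(2,3) by auto
      qed
      then have "card S \<le> card (set [(a,b),(b,a),(a,c),(c,a),(b,c),(c,b)])"
        by (rule card_mono[rotated]) simp
      also have "\<dots> \<le> 6" using card_length[of "[(a,b),(b,a),(a,c),(c,a),(b,c),(c,b)]"] by simp
      finally show False using c7 by linarith
    qed
  qed
qed


theorem lemma9p6:
  fixes A :: "('a,'b) monoid_scheme" and B :: "('a,'c) monoid_scheme"
  assumes "group A" and "group B"
    and "carrier B = carrier A"
    and "finite (carrier A)"
    and "\<one>\<^bsub>B\<^esub> = \<one>\<^bsub>A\<^esub>"
    and "\<exists>a\<in>carrier A. \<exists>b\<in>carrier A. a \<otimes>\<^bsub>A\<^esub> b \<noteq> a \<otimes>\<^bsub>B\<^esub> b"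
    and "m_val A B \<ge> 3"
    and "card (S_set A B) \<ge> 7"
  shows "profit A B \<ge> 2 * (int (card (carrier A)) - int (q_val A) - 2 * int (m_val A B))"
proof -
  note GA = assms(1) and GB = assms(2) and CB = assms(3) and fin = assms(4)
  interpret A: group A by (rule GA)
  interpret B: group B by (rule GB)
  define C where "C = carrier A"
  define n where "n = card C"
  define d where "d = dist_at A B"
  define K where "K = K_set A B"
  define H where "H = H_set A B"
  define m where "m = m_val A B"
  define q where "q = q_val A"
  define N where "N = int n - int q - 2 * int m"
  define g where "g x = (if x \<in> K then (if x \<in> H then 0 else int (d x) - int m) else int (d x) - int q)" for x
  have finC: "finite C" using fin C_def by simp
  have npos: "0 < n" unfolding n_def C_def using fin A.one_closed card_gt_0_iff by blast
  have HK: "H \<subseteq> K" unfolding H_def K_def H_set_def K_set_def using npos n_def C_def by auto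
  have KC: "K \<subseteq> C" unfolding K_def K_set_def C_def by auto
  have Hd: "x \<in> H \<Longrightarrow> d x = 0" for x unfolding H_def H_set_def d_def by auto
  have Kd: "x \<in> K \<Longrightarrow> 3 * d x < n" for x
    unfolding K_def K_set_def d_def n_def C_def by auto
  have nKd: "x \<in> C \<Longrightarrow> x \<notin> K \<Longrightarrow> n \<le> 3 * d x" for x
    unfolding K_def K_set_def d_def n_def C_def by auto
  have KHd: "x \<in> K \<Longrightarrow> x \<notin> H \<Longrightarrow> m \<le> d x" for x
  proof -
    assume xK: "x \<in> K" and xH: "x \<notin> H"
    have xC: "x \<in> C" using xK KC by auto
    have pos: "0 < d x" using xC xH unfolding H_def H_set_def d_def C_def by auto
    have "finite {dist_at A B a | a. a \<in> carrier A \<and> dist_at A B a > 0}"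
      by (rule finite_subset[OF _ finite_imageI[OF fin, of "dist_at A B"]]) auto
    then show "m \<le> d x" unfolding m_def m_val_def using xC pos C_def d_def
      by (intro Min_le) auto
  qed
  have qi: "int q = \<lceil>real n / 3\<rceil>" unfolding q_def q_val_def n_def C_def by simp
  have q1: "int n \<le> 3 * int q" using ceiling_correct[of "real n / 3"] qi by linarith
  have q2: "3 * int q \<le> int n + 2"
  proof -
    have "real_of_int (int q) - 1 < real n / 3" using ceiling_correct[of "real n / 3"] qi by simp
    then have "real_of_int (3 * int q) < real_of_int (int n + 3)" by simp
    then show ?thesis by linarith
  qed
  have nKq: "x \<in> C \<Longrightarrow> x \<notin> K \<Longrightarrow> int q \<le> int (d x)" for x
    using nKd[of x] q2 by linarith
  have gnn: "x \<in> C \<Longrightarrow> 0 \<le> g x" for x using nKq KHd unfolding g_def by force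
  have gK: "x \<in> K \<Longrightarrow> int (d x) \<le> int m + g x" for x using Hd unfolding g_def by auto
  have gKH: "x \<in> K \<Longrightarrow> x \<notin> H \<Longrightarrow> 2 * g x \<le> N" for x
    using Kd[of x] q2 unfolding g_def N_def by auto
  have gnK: "x \<notin> K \<Longrightarrow> g x = int (d x) - int q" for x unfolding g_def by auto
  have profit_eq: "profit A B = (\<Sum>x\<in>C. g x)"
  proof -
    have finK: "finite K" "finite H" "finite (K - H)" "finite (C - K)"
      using finite_subset[OF KC finC] finite_subset[OF HK] finC by auto
    have "diff_set A B = (SIGMA a:C. {b\<in>C. a \<otimes>\<^bsub>A\<^esub> b \<noteq> a \<otimes>\<^bsub>B\<^esub> b})"
      by (auto simp: diff_set_def C_def)
    then have dsum: "dist_ops A B = (\<Sum>x\<in>C. d x)"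
      unfolding dist_ops_def d_def dist_at_def C_def using fin by simp
    have cKH: "int (card K) - int (card H) = int (card (K - H))"
      using card_Diff_subset[OF finK(2) HK] card_mono[OF finK(1) HK] by simp
    have cCK: "int n - int (card K) = int (card (C - K))"
      using card_Diff_subset[OF finite_subset[OF KC finC] KC] card_mono[OF finC KC] n_def by simp
    have s1: "(\<Sum>x\<in>C. f x) = (\<Sum>x\<in>C - K. f x) + (\<Sum>x\<in>K - H. f x) + (\<Sum>x\<in>H. f x)"
      for f :: "'a \<Rightarrow> int"
      using sum.subset_diff[OF KC finC, of f] sum.subset_diff[OF HK finK(1), of f] by simp
    have "(\<Sum>x\<in>C. g x) = (\<Sum>x\<in>C - K. int (d x) - int q) + (\<Sum>x\<in>K - H. int (d x) - int m) + (\<Sum>x\<in>H. int (d x))"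
    proof -
      have "(\<Sum>x\<in>H. g x) = 0" using HK by (intro sum.neutral) (auto simp: g_def)
      moreover have "(\<Sum>x\<in>H. int (d x)) = 0" using Hd by simp
      ultimately show ?thesis using s1[of g] unfolding g_def by simp
    qed
    also have "\<dots> = (\<Sum>x\<in>C. int (d x)) - (int (card (C - K)) * int q + int (card (K - H)) * int m)"
      using s1[of "\<lambda>x. int (d x)"] by (simp add: sum_subtractf)
    also have "\<dots> = profit A B"
    proof -
      have e1: "int (card (K_set A B)) - int (card (H_set A B)) = int (card (K - H))"
        using cKH unfolding K_def H_def .
      have e2: "int (card (carrier A)) - int (card (K_set A B)) = int (card (C - K))"
        using cCK unfolding K_def n_def C_def .
      show ?thesis unfolding profit_def e1 e2 dsum m_def q_def by simp
    qed
    finally show ?thesis ..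
  qed
  have sumle: "W \<subseteq> C \<Longrightarrow> sum g W \<le> profit A B" for W
    using sum_mono2[OF finC, of W g] gnn profit_eq by auto
  define S where "S = S_set A B"
  have Sp: "a \<in> K \<and> b \<in> K \<and> a \<noteq> b \<and> a \<notin> H \<and> a \<in> C \<and> b \<in> C \<and> a \<otimes>\<^bsub>A\<^esub> b \<noteq> a \<otimes>\<^bsub>B\<^esub> b"
    if ab: "(a,b) \<in> S" for a b
  proof -
    have *: "a \<in> K" "b \<in> K" "a \<noteq> b" "a \<in> C" "b \<in> C" "a \<otimes>\<^bsub>A\<^esub> b \<noteq> a \<otimes>\<^bsub>B\<^esub> b"
      using ab unfolding S_def S_set_def diff_set_def K_def C_def by auto
    have "a \<notin> H"
    proof
      assume "a \<in> H"
      then have "card {c \<in> carrier A. a \<otimes>\<^bsub>A\<^esub> c \<noteq> a \<otimes>\<^bsub>B\<^esub> c} = 0"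
        unfolding H_def H_set_def dist_at_def by auto
      moreover have "b \<in> {c \<in> carrier A. a \<otimes>\<^bsub>A\<^esub> c \<noteq> a \<otimes>\<^bsub>B\<^esub> c}" using * C_def by auto
      ultimately show False using fin by auto
    qed
    then show ?thesis using * by auto
  qed
  have gX: "x \<in> C \<and> x \<notin> K \<and> N - g a - g b \<le> g x"
    if ab: "(a,b) \<in> S" and x: "x = a \<otimes>\<^bsub>A\<^esub> b \<or> x = a \<otimes>\<^bsub>B\<^esub> b" for a b x
  proof -
    note P = Sp[OF ab]
    have rb: "n \<le> d x + d a + d b"
      using row_bound[OF GA GB CB fin _ _ _ x] P unfolding n_def d_def C_def by auto
    have xC: "x \<in> C" using x P CB B.m_closed unfolding C_def by auto
    have xK: "x \<notin> K" using Kd[of x] Kd[of a] Kd[of b] P rb by auto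
    have "N - g a - g b \<le> g x"
      using gnK[OF xK] gK[of a] gK[of b] P rb unfolding N_def by auto
    then show ?thesis using xC xK by auto
  qed
  have finS: "finite S"
    by (rule finite_subset[of _ "C \<times> C"]) (use Sp finC in auto)
  have irr: "\<forall>(a,b)\<in>S. a \<noteq> b" using Sp by auto
  have c7: "7 \<le> card S" using assms(8) S_def by simp
  have gKH': "a \<in> K \<Longrightarrow> a \<notin> H \<Longrightarrow> 0 \<le> g a" for a using gnn KC by auto
  from comb[OF finS irr c7] show ?thesis
  proof (elim disjE exE conjE)
    fix a assume c3: "3 \<le> card {b. (a,b)\<in>S}"
    define F where "F = {b. (a,b)\<in>S}"
    have "F \<noteq> {}" using c3 F_def by auto
    then obtain b0 where "(a,b0) \<in> S" using F_def by auto
    note Pa = Sp[OF this]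
    have FK: "F \<subseteq> K" "a \<notin> F" using Sp unfolding F_def by auto
    have finF: "finite F" using finite_subset[OF FK(1) finite_subset[OF KC finC]] .
    define X where "X = (\<lambda>b. a \<otimes>\<^bsub>A\<^esub> b) ` F"
    have FC: "F \<subseteq> carrier A" using FK KC C_def by auto
    have inj: "inj_on (\<lambda>b. a \<otimes>\<^bsub>A\<^esub> b) F"
    proof (rule inj_onI)
      fix x y assume "x \<in> F" "y \<in> F" "a \<otimes>\<^bsub>A\<^esub> x = a \<otimes>\<^bsub>A\<^esub> y"
      then show "x = y" using FC Pa A.Units_l_cancel[of a x y] A.Units_eq C_def by blast
    qed
    have XK: "X \<inter> K = {}" "X \<subseteq> C" using gX unfolding X_def F_def by auto
    have sub: "insert a (F \<union> X) \<subseteq> C" using XK FK KC Pa by auto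
    have e1: "sum g (insert a (F \<union> X)) = g a + (sum g F + sum g X)"
      using FK XK Pa finF X_def by (subst sum.insert) (auto intro: sum.union_disjoint)
    have e2: "sum g X = (\<Sum>b\<in>F. g (a \<otimes>\<^bsub>A\<^esub> b))"
      unfolding X_def using sum.reindex[OF inj, of g] by simp
    have e3: "sum g F + sum g X = (\<Sum>b\<in>F. g b + g (a \<otimes>\<^bsub>A\<^esub> b))" unfolding e2 by (simp add: sum.distrib)
    have e4: "(\<Sum>b\<in>F. N - g a) \<le> (\<Sum>b\<in>F. g b + g (a \<otimes>\<^bsub>A\<^esub> b))"
      by (rule sum_mono) (use gX F_def in force)
    have G1: "g a + card F * (N - g a) \<le> profit A B" using sumle[OF sub] e1 e3 e4 by simp
    have G2: "3 * (N - g a) \<le> card F * (N - g a)"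
      using c3 F_def gKH[of a] gKH'[of a] Pa by (intro mult_right_mono) auto
    have G3: "g a + 3 * (N - g a) \<le> profit A B" using G1 G2 by (meson add_left_mono order_trans)
    have "2 * g a \<le> N" using gKH Pa by auto
    with G3 have "2 * N \<le> profit A B" by (simp add: algebra_simps)
    then show ?thesis unfolding N_def m_def q_def n_def C_def .
  next
    fix b assume c3: "3 \<le> card {a. (a,b)\<in>S}"
    define F where "F = {a. (a,b)\<in>S}"
    have "F \<noteq> {}" using c3 F_def by auto
    then obtain a0 where a0: "(a0,b) \<in> S" using F_def by auto
    note Pb = Sp[OF this]
    have FK: "F \<subseteq> K" "b \<notin> F" using Sp unfolding F_def by auto
    have FH: "F \<inter> H = {}" using Sp unfolding F_def by auto
    have finF: "finite F" using finite_subset[OF FK(1) finite_subset[OF KC finC]] .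
    define X where "X = (\<lambda>a. a \<otimes>\<^bsub>A\<^esub> b) ` F"
    have FC: "F \<subseteq> carrier A" using FK KC C_def by auto
    have inj: "inj_on (\<lambda>a. a \<otimes>\<^bsub>A\<^esub> b) F"
    proof (rule inj_onI)
      fix x y assume "x \<in> F" "y \<in> F" "x \<otimes>\<^bsub>A\<^esub> b = y \<otimes>\<^bsub>A\<^esub> b"
      then show "x = y" using FC Pb A.right_cancel[of b x y] C_def by blast
    qed
    have XK: "X \<inter> K = {}" "X \<subseteq> C" using gX unfolding X_def F_def by auto
    have sub: "insert b (F \<union> X) \<subseteq> C" using XK FK KC Pb by auto
    have e1: "sum g (insert b (F \<union> X)) = g b + (sum g F + sum g X)"
      using FK XK Pb finF X_def by (subst sum.insert) (auto intro: sum.union_disjoint)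
    have e2: "sum g X = (\<Sum>a\<in>F. g (a \<otimes>\<^bsub>A\<^esub> b))"
      unfolding X_def using sum.reindex[OF inj, of g] by simp
    have e3: "sum g F + sum g X = (\<Sum>a\<in>F. g a + g (a \<otimes>\<^bsub>A\<^esub> b))" unfolding e2 by (simp add: sum.distrib)
    have e4: "(\<Sum>a\<in>F. N - g b) \<le> (\<Sum>a\<in>F. g a + g (a \<otimes>\<^bsub>A\<^esub> b))"
      by (rule sum_mono) (use gX F_def in force)
    have G1: "g b + card F * (N - g b) \<le> profit A B" using sumle[OF sub] e1 e3 e4 by simp
    have bnn: "0 \<le> g b" using gnn Pb by auto
    have G4: "2 * g b \<le> N"
    proof (cases "b \<in> H")
      case True
      then have "g b = 0" using Pb unfolding g_def by auto
      moreover have "0 \<le> g a0" "2 * g a0 \<le> N" using gKH[of a0] gnn Sp[OF a0] by auto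
      ultimately show ?thesis by linarith
    next
      case False then show ?thesis using gKH Pb by auto
    qed
    have G2: "3 * (N - g b) \<le> card F * (N - g b)"
      using c3 F_def bnn G4 by (intro mult_right_mono) auto
    have G3: "g b + 3 * (N - g b) \<le> profit A B" using G1 G2 by (meson add_left_mono order_trans)
    from G3 G4 have "2 * N \<le> profit A B" by (simp add: algebra_simps)
    then show ?thesis unfolding N_def m_def q_def n_def C_def .
  next
    fix a1 b1 a2 b2
    assume p1: "(a1,b1) \<in> S" and p2: "(a2,b2) \<in> S"
      and ne: "a1 \<noteq> a2" "a1 \<noteq> b2" "b1 \<noteq> a2" "b1 \<noteq> b2"
    note P1 = Sp[OF p1] and P2 = Sp[OF p2]
    define x1 where "x1 = a1 \<otimes>\<^bsub>A\<^esub> b1"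
    have X1: "x1 \<in> C \<and> x1 \<notin> K \<and> N - g a1 - g b1 \<le> g x1" using gX[OF p1] x1_def by auto
    obtain x2 where x2: "x2 = a2 \<otimes>\<^bsub>A\<^esub> b2 \<or> x2 = a2 \<otimes>\<^bsub>B\<^esub> b2" and x12: "x2 \<noteq> x1"
      using P2 by metis
    have X2: "x2 \<in> C \<and> x2 \<notin> K \<and> N - g a2 - g b2 \<le> g x2" using gX[OF p2 x2] by auto
    have sub: "{a1,b1,a2,b2,x1,x2} \<subseteq> C" using X1 X2 P1 P2 by auto
    have dd: "a1 \<noteq> x1" "a1 \<noteq> x2" "b1 \<noteq> x1" "b1 \<noteq> x2" "a2 \<noteq> x1" "a2 \<noteq> x2" "b2 \<noteq> x1" "b2 \<noteq> x2"
      using X1 X2 P1 P2 by auto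
    have "sum g {a1,b1,a2,b2,x1,x2} = g a1 + g b1 + g a2 + g b2 + g x1 + g x2"
      using ne dd x12 P1 P2 by simp
    then have "2 * N \<le> profit A B" using sumle[OF sub] X1 X2 by linarith
    then show ?thesis unfolding N_def m_def q_def n_def C_def .
  qed
qed

end
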